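(* Let $(V,v)$ be a pair of continuous upper and lower probabilities on $(\Omega,\mathcal{F})$ and let $\mathcal{F}_0$ be a sub-$\sigma$-algebra of $\mathcal{F}$ with $v(A)\in\{0,1\}$ for all $A\in\mathcal{F}_0$. Then for every $\mathcal{F}_0$-measurable real-valued random variable $\xi$, $$v\Big(\Big\{\int_{\Omega}\xi\, dv \le\xi\le\int_{\Omega}\xi\, dV\Big\}\Big)=1,\quad V\Big(\Big\{\xi=\int_{\Omega}\xi\, dv\Big\}\Big)=1,\quad V\Big(\Big\{\xi=\int_{\Omega}\xi\, dV\Big\}\Big)=1.$$
   Context: For a nonempty set $\mathcal{P}$ of finitely additive probabilities on $\mathcal{F}$, $V(A)=\sup_{P\in\mathcal{P}}P(A)$ and $v(A)=\inf_{P\in\mathcal{P}}P(A)$ are the upper and lower probabilities; they are continuous if $V(A_n)\to V(A)$ and $v(A_n)\to v(A)$ whenever $A_n\uparrow A$ or $A_n\downarrow A$. Choquet integral: $\int_{\Omega}\xi\, d\mu=\int_{0}^{\infty}\mu(\{\xi\ge t\})\,dt+\int_{-\infty}^0[\mu(\{\xi\ge t\})-1]\,dt$. *)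

theory Defs
  imports "HOL-Analysis.Analysis"
begin

definition fa_prob :: "'a set \<Rightarrow> 'a set set \<Rightarrow> ('a set \<Rightarrow> real) \<Rightarrow> bool" where
  "fa_prob \<Omega> F P \<longleftrightarrow>
     (\<forall>A\<in>F. 0 \<le> P A) \<and> P \<Omega> = 1 \<and>
     (\<forall>A\<in>F. \<forall>B\<in>F. A \<inter> B = {} \<longrightarrow> P (A \<union> B) = P A + P B)"

definition upper_prob :: "('a set \<Rightarrow> real) set \<Rightarrow> 'a set \<Rightarrow> real" where
  "upper_prob \<P> A = (SUP P\<in>\<P>. P A)"

definition lower_prob :: "('a set \<Rightarrow> real) set \<Rightarrow> 'a set \<Rightarrow> real" where
  "lower_prob \<P> A = (INF P\<in>\<P>. P A)"

definition continuous_setfun :: "'a set set \<Rightarrow> ('a set \<Rightarrow> real) \<Rightarrow> bool" where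
  "continuous_setfun F \<mu> \<longleftrightarrow>
     (\<forall>A. (\<forall>n. A n \<in> F) \<longrightarrow> incseq A \<longrightarrow> (\<lambda>n. \<mu> (A n)) \<longlonglongrightarrow> \<mu> (\<Union>n. A n)) \<and>
     (\<forall>A. (\<forall>n. A n \<in> F) \<longrightarrow> decseq A \<longrightarrow> (\<lambda>n. \<mu> (A n)) \<longlonglongrightarrow> \<mu> (\<Inter>n. A n))"

definition choquet :: "'a set \<Rightarrow> ('a set \<Rightarrow> real) \<Rightarrow> ('a \<Rightarrow> real) \<Rightarrow> real" where
  "choquet \<Omega> \<mu> \<xi> =
     (LBINT t:{0..}. \<mu> {\<omega>\<in>\<Omega>. t \<le> \<xi> \<omega>}) +
     (LBINT t:{..<0}. \<mu> {\<omega>\<in>\<Omega>. t \<le> \<xi> \<omega>} - 1)"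

end

theory Submission
  imports Defs
begin

lemma fa_split:
  assumes F: "sigma_algebra \<Omega> F" and P: "fa_prob \<Omega> F P" and A: "A \<in> F" and B: "B \<in> F"
  shows "P (A - B) + P (A \<inter> B) = P A"
proof -
  interpret sigma_algebra \<Omega> F by fact
  have D: "A - B \<in> F" using A B by (rule Diff)
  have I: "A \<inter> B \<in> F" using A B by (rule Int)
  have add: "\<forall>A\<in>F. \<forall>B\<in>F. A \<inter> B = {} \<longrightarrow> P (A \<union> B) = P A + P B"
    using P unfolding fa_prob_def by (elim conjE)
  have "P ((A - B) \<union> (A \<inter> B)) = P (A - B) + P (A \<inter> B)"
    using add D I by (metis Diff_disjoint inf_assoc inf_bot_left inf_commute)
  moreover have "(A - B) \<union> (A \<inter> B) = A" by (rule Un_Diff_Int)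
  ultimately show ?thesis by metis
qed
lemma fa_props:
  assumes F: "sigma_algebra \<Omega> F" and P: "fa_prob \<Omega> F P" and A: "A \<in> F"
  shows "0 \<le> P A" "P A \<le> 1" "P (\<Omega> - A) = 1 - P A" "P \<Omega> = 1"
proof -
  interpret sigma_algebra \<Omega> F by fact
  have O: "\<Omega> \<in> F" by simp
  have AO: "A \<subseteq> \<Omega>" using A sets_into_space by blast
  have "P (\<Omega> - A) + P (\<Omega> \<inter> A) = P \<Omega>" using fa_split[OF F P O A] .
  moreover have "\<Omega> \<inter> A = A" using AO by auto
  moreover have "P \<Omega> = 1" "0 \<le> P (\<Omega> - A)" "0 \<le> P A"
    using P O A unfolding fa_prob_def by auto
  ultimately show "0 \<le> P A" "P A \<le> 1" "P (\<Omega> - A) = 1 - P A" "P \<Omega> = 1" by auto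
qed

lemma fa_mono:
  assumes F: "sigma_algebra \<Omega> F" and P: "fa_prob \<Omega> F P" and A: "A \<in> F" and B: "B \<in> F"
    and AB: "A \<subseteq> B"
  shows "P A \<le> P B"
proof -
  have "P (B - A) + P (B \<inter> A) = P B" using fa_split[OF F P B A] .
  moreover have "B \<inter> A = A" using AB by auto
  moreover have "0 \<le> P (B - A)"
  proof -
    interpret sigma_algebra \<Omega> F by fact
    show ?thesis using A B P unfolding fa_prob_def by auto
  qed
  ultimately show ?thesis by auto
qed

lemma threshold:
  fixes \<mu> :: "'a set \<Rightarrow> real" and \<xi> :: "'a \<Rightarrow> real"
  assumes F: "sigma_algebra \<Omega> F" and cont: "continuous_setfun F \<mu>"
    and mono: "\<And>A B. A \<in> F \<Longrightarrow> B \<in> F \<Longrightarrow> A \<subseteq> B \<Longrightarrow> \<mu> A \<le> \<mu> B"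
    and top: "\<mu> \<Omega> = 1" and bot: "\<mu> {} = 0"
    and G: "\<And>t. {\<omega>\<in>\<Omega>. t \<le> \<xi> \<omega>} \<in> F"
    and G01: "\<And>t. \<mu> {\<omega>\<in>\<Omega>. t \<le> \<xi> \<omega>} \<in> {0,1}"
  shows "\<exists>c. (\<forall>t. \<mu> {\<omega>\<in>\<Omega>. t \<le> \<xi> \<omega>} = (if t \<le> c then 1 else 0))
             \<and> \<mu> {\<omega>\<in>\<Omega>. c < \<xi> \<omega>} = 0"
proof -
  define Gs where "Gs = (\<lambda>t. {\<omega>\<in>\<Omega>. t \<le> \<xi> \<omega>})"
  have Gs: "Gs t \<in> F" for t using G Gs_def by simp
  have Gs01: "\<mu> (Gs t) \<in> {0,1}" for t using G01 Gs_def by simp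
  have Gmono: "s \<le> t \<Longrightarrow> \<mu> (Gs t) \<le> \<mu> (Gs s)" for s t
    by (rule mono[OF Gs Gs]) (auto simp: Gs_def)
  have inc: "\<And>A. (\<forall>n. A n \<in> F) \<Longrightarrow> incseq A \<Longrightarrow> (\<lambda>n. \<mu> (A n)) \<longlonglongrightarrow> \<mu> (\<Union>n. A n)"
   and dec: "\<And>A. (\<forall>n. A n \<in> F) \<Longrightarrow> decseq A \<Longrightarrow> (\<lambda>n. \<mu> (A n)) \<longlonglongrightarrow> \<mu> (\<Inter>n. A n)"
    using cont unfolding continuous_setfun_def by auto
  have lo: "\<exists>t. \<mu> (Gs t) = 1"
  proof (rule ccontr)
    assume nt: "\<not> ?thesis"
    let ?A = "\<lambda>n::nat. Gs (- real n)"
    have "(\<lambda>n. \<mu> (?A n)) \<longlonglongrightarrow> \<mu> (\<Union>n. ?A n)"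
      by (rule inc) (auto simp: G incseq_def Gs_def)
    moreover have "(\<Union>n. ?A n) = \<Omega>"
    proof safe
      fix \<omega> assume "\<omega> \<in> \<Omega>"
      obtain n where "- \<xi> \<omega> < real n" using reals_Archimedean2 by blast
      then show "\<omega> \<in> (\<Union>n. ?A n)" using \<open>\<omega> \<in> \<Omega>\<close> by (auto simp: Gs_def intro!: exI[of _ n])
    qed (auto simp: Gs_def)
    moreover have "\<mu> (?A n) = 0" for n using nt Gs01[of "- real n"] by auto
    ultimately have "(\<lambda>n. 0::real) \<longlonglongrightarrow> 1" using top by simp
    then show False using LIMSEQ_unique[OF tendsto_const] by fastforce
  qed
  have hi: "\<exists>t. \<mu> (Gs t) = 0"
  proof (rule ccontr)
    assume nt: "\<not> ?thesis"
    let ?A = "\<lambda>n::nat. Gs (real n)"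
    have "(\<lambda>n. \<mu> (?A n)) \<longlonglongrightarrow> \<mu> (\<Inter>n. ?A n)"
      by (rule dec) (auto simp: G decseq_def Gs_def)
    moreover have "(\<Inter>n. ?A n) = {}"
    proof safe
      fix \<omega> assume "\<omega> \<in> (\<Inter>n. ?A n)"
      moreover obtain n where "\<xi> \<omega> < real n" using reals_Archimedean2 by blast
      ultimately show "\<omega> \<in> {}" by (auto simp: Gs_def dest!: spec[of _ n])
    qed
    moreover have "\<mu> (?A n) = 1" for n using nt Gs01[of "real n"] by auto
    ultimately have "(\<lambda>n. 1::real) \<longlonglongrightarrow> 0" using bot by simp
    then show False using LIMSEQ_unique[OF tendsto_const] by fastforce
  qed
  obtain t0 where t0: "\<mu> (Gs t0) = 1" using lo by blast
  obtain t1 where t1: "\<mu> (Gs t1) = 0" using hi by blast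
  define S where "S = {t. \<mu> (Gs t) = 1}"
  have Sne: "S \<noteq> {}" using t0 S_def by auto
  have Sb: "t \<in> S \<Longrightarrow> t < t1" for t
  proof (rule ccontr)
    assume "t \<in> S" "\<not> t < t1"
    then have "\<mu> (Gs t) \<le> \<mu> (Gs t1)" by (intro Gmono) auto
    then show False using \<open>t \<in> S\<close> t1 S_def by auto
  qed
  have bdd: "bdd_above S" using Sb by (meson bdd_above.I less_imp_le)
  define c where "c = Sup S"
  have above: "c < t \<Longrightarrow> \<mu> (Gs t) = 0" for t
  proof -
    assume "c < t"
    then have "t \<notin> S" using cSup_upper[OF _ bdd] c_def by force
    then show ?thesis using Gs01[of t] S_def by auto
  qed
  have atc: "\<mu> (Gs c) = 1"
  proof -
    let ?A = "\<lambda>n::nat. Gs (c - inverse (real (Suc n)))"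
    have "(\<lambda>n. \<mu> (?A n)) \<longlonglongrightarrow> \<mu> (\<Inter>n. ?A n)"
    proof (rule dec)
      show "decseq ?A" unfolding decseq_def Gs_def
      proof (intro allI impI subsetI)
        fix m n :: nat and \<omega> assume mn: "m \<le> n" and w: "\<omega> \<in> {\<omega> \<in> \<Omega>. c - inverse (real (Suc n)) \<le> \<xi> \<omega>}"
        have le: "inverse (real (Suc n)) \<le> inverse (real (Suc m))"
          using mn by (simp add: le_imp_inverse_le)
        from w have w1: "\<omega> \<in> \<Omega>" and w2: "c - inverse (real (Suc n)) \<le> \<xi> \<omega>" by auto
        have "c - inverse (real (Suc m)) \<le> \<xi> \<omega>" using w2 le by linarith
        then show "\<omega> \<in> {\<omega> \<in> \<Omega>. c - inverse (real (Suc m)) \<le> \<xi> \<omega>}" using w1 by blast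
      qed
    qed (auto simp: Gs)
    moreover have "(\<Inter>n. ?A n) = Gs c"
    proof safe
      fix \<omega> assume w: "\<omega> \<in> (\<Inter>n. ?A n)"
      then have wO: "\<omega> \<in> \<Omega>" by (auto simp: Gs_def)
      show "\<omega> \<in> Gs c"
      proof (rule ccontr)
        assume "\<omega> \<notin> Gs c"
        then have "0 < c - \<xi> \<omega>" using wO by (auto simp: Gs_def)
        then obtain n where "inverse (real (Suc n)) < c - \<xi> \<omega>" using reals_Archimedean by blast
        then show False using w by (auto simp: Gs_def dest!: spec[of _ n])
      qed
    next
      fix \<omega> n assume "\<omega> \<in> Gs c"
      then have w1: "\<omega> \<in> \<Omega>" and w2: "c \<le> \<xi> \<omega>" by (auto simp: Gs_def)
      have "0 \<le> inverse (real (Suc n))" by simp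
      then have "c - inverse (real (Suc n)) \<le> \<xi> \<omega>" using w2 by linarith
      then show "\<omega> \<in> ?A n" using w1 by (simp add: Gs_def)
    qed
    moreover have "\<mu> (?A n) = 1" for n
    proof -
      have "c - inverse (real (Suc n)) < Sup S" using c_def by simp
      then obtain s where s: "s \<in> S" "c - inverse (real (Suc n)) < s"
        using less_cSup_iff[OF Sne bdd] by blast
      then have "\<mu> (Gs s) \<le> \<mu> (?A n)" by (intro Gmono) auto
      then show ?thesis using s S_def Gs01[of "c - inverse (real (Suc n))"] by auto
    qed
    ultimately have "(\<lambda>n. 1::real) \<longlonglongrightarrow> \<mu> (Gs c)" by simp
    then show ?thesis using LIMSEQ_unique[OF tendsto_const] by fastforce
  qed
  have all: "\<mu> (Gs t) = (if t \<le> c then 1 else 0)" for t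
  proof (cases "t \<le> c")
    case True
    then have "\<mu> (Gs c) \<le> \<mu> (Gs t)" by (intro Gmono)
    then show ?thesis using True atc Gs01[of t] by auto
  next
    case False
    then show ?thesis using above by auto
  qed
  have strict: "\<mu> {\<omega>\<in>\<Omega>. c < \<xi> \<omega>} = 0"
  proof -
    let ?A = "\<lambda>n::nat. Gs (c + inverse (real (Suc n)))"
    have "(\<lambda>n. \<mu> (?A n)) \<longlonglongrightarrow> \<mu> (\<Union>n. ?A n)"
    proof (rule inc)
      show "incseq ?A" unfolding incseq_def Gs_def
      proof (intro allI impI subsetI)
        fix m n :: nat and \<omega> assume mn: "m \<le> n" and w: "\<omega> \<in> {\<omega> \<in> \<Omega>. c + inverse (real (Suc m)) \<le> \<xi> \<omega>}"
        have le: "inverse (real (Suc n)) \<le> inverse (real (Suc m))"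
          using mn by (simp add: le_imp_inverse_le)
        from w have w1: "\<omega> \<in> \<Omega>" and w2: "c + inverse (real (Suc m)) \<le> \<xi> \<omega>" by auto
        have "c + inverse (real (Suc n)) \<le> \<xi> \<omega>" using w2 le by linarith
        then show "\<omega> \<in> {\<omega> \<in> \<Omega>. c + inverse (real (Suc n)) \<le> \<xi> \<omega>}" using w1 by blast
      qed
    qed (auto simp: Gs)
    moreover have "(\<Union>n. ?A n) = {\<omega>\<in>\<Omega>. c < \<xi> \<omega>}"
    proof safe
      fix \<omega> assume "\<omega> \<in> \<Omega>" "c < \<xi> \<omega>"
      then have "0 < \<xi> \<omega> - c" by simp
      then obtain n where "inverse (real (Suc n)) < \<xi> \<omega> - c" using reals_Archimedean by blast
      then show "\<omega> \<in> (\<Union>n. ?A n)" using \<open>\<omega> \<in> \<Omega>\<close> by (auto simp: Gs_def intro!: exI[of _ n])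
    next
      fix \<omega> n assume "\<omega> \<in> ?A n"
      then have w2: "c + inverse (real (Suc n)) \<le> \<xi> \<omega>" by (simp add: Gs_def)
      have "0 < inverse (real (Suc n))" by simp
      then show "c < \<xi> \<omega>" using w2 by linarith
    qed (auto simp: Gs_def)
    moreover have "\<mu> (?A n) = 0" for n
      using above[of "c + inverse (real (Suc n))"] by simp
    ultimately have "(\<lambda>n. 0::real) \<longlonglongrightarrow> \<mu> {\<omega>\<in>\<Omega>. c < \<xi> \<omega>}" by simp
    then show ?thesis using LIMSEQ_unique[OF tendsto_const] by fastforce
  qed
  show ?thesis using all strict unfolding Gs_def by blast
qed

lemma choquet_step:
  assumes "\<And>t. \<mu> {\<omega>\<in>\<Omega>. t \<le> \<xi> \<omega>} = (if t \<le> c then 1 else 0)"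
  shows "choquet \<Omega> \<mu> \<xi> = c"
proof -
  have e1: "(\<lambda>t::real. indicator {0..} t *\<^sub>R \<mu> {\<omega>\<in>\<Omega>. t \<le> \<xi> \<omega>}) = indicator {0..c}"
    by (auto simp: assms indicator_def fun_eq_iff)
  have e2: "(\<lambda>t::real. indicator {..<0} t *\<^sub>R (\<mu> {\<omega>\<in>\<Omega>. t \<le> \<xi> \<omega>} - 1)) = (\<lambda>t. - indicator {c<..<0} t)"
    by (auto simp: assms indicator_def fun_eq_iff)
  have "choquet \<Omega> \<mu> \<xi> = measure lborel {0..c} - measure lborel {c<..<0}"
    unfolding choquet_def set_lebesgue_integral_def e1 e2 by simp
  also have "\<dots> = c"
  proof (cases "0 \<le> c")
    case True
    then show ?thesis by simp
  next
    case False
    then have "measure lborel {0..c} = 0" by simp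
    moreover have "measure lborel {c<..<0} = - c" using False by (simp add: measure_def)
    ultimately show ?thesis by simp
  qed
  finally show ?thesis .
qed


lemma lp_le:
  assumes F: "sigma_algebra \<Omega> F" and Pf: "\<forall>P\<in>\<P>. fa_prob \<Omega> F P"
    and P: "P \<in> \<P>" and A: "A \<in> F"
  shows "lower_prob \<P> A \<le> P A"
proof -
  have "bdd_below ((\<lambda>P. P A) ` \<P>)"
    using fa_props(1)[OF F _ A] Pf by (intro bdd_belowI[of _ 0]) auto
  then show ?thesis unfolding lower_prob_def using P by (rule cINF_lower)
qed

lemma lp_ge:
  assumes ne: "\<P> \<noteq> {}" and h: "\<And>P. P \<in> \<P> \<Longrightarrow> c \<le> P A"
  shows "c \<le> lower_prob \<P> A"
  unfolding lower_prob_def using ne h by (rule cINF_greatest)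

lemma up_ge:
  assumes F: "sigma_algebra \<Omega> F" and Pf: "\<forall>P\<in>\<P>. fa_prob \<Omega> F P"
    and P: "P \<in> \<P>" and A: "A \<in> F"
  shows "P A \<le> upper_prob \<P> A"
proof -
  have "bdd_above ((\<lambda>P. P A) ` \<P>)"
    using fa_props(2)[OF F _ A] Pf by (intro bdd_aboveI[of _ 1]) auto
  then show ?thesis unfolding upper_prob_def by (rule cSUP_upper[OF P])
qed

lemma up_le:
  assumes ne: "\<P> \<noteq> {}" and h: "\<And>P. P \<in> \<P> \<Longrightarrow> P A \<le> c"
  shows "upper_prob \<P> A \<le> c"
  unfolding upper_prob_def using ne h by (rule cSUP_least)

lemma fa_empty:
  assumes F: "sigma_algebra \<Omega> F" and P: "fa_prob \<Omega> F P"
  shows "P {} = 0"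
proof -
  interpret sigma_algebra \<Omega> F by fact
  have "\<forall>A\<in>F. \<forall>B\<in>F. A \<inter> B = {} \<longrightarrow> P (A \<union> B) = P A + P B"
    using P unfolding fa_prob_def by (elim conjE)
  then have "P ({} \<union> {}) = P {} + P {}" using empty_sets by blast
  then show ?thesis by simp
qed



theorem corollary1:
  fixes \<Omega> :: "'a set" and F F0 :: "'a set set" and \<P> :: "('a set \<Rightarrow> real) set"
    and \<xi> :: "'a \<Rightarrow> real"
  assumes F: "sigma_algebra \<Omega> F"
    and P_ne: "\<P> \<noteq> {}"
    and P_fa: "\<forall>P\<in>\<P>. fa_prob \<Omega> F P"
    and contV: "continuous_setfun F (upper_prob \<P>)"
    and contv: "continuous_setfun F (lower_prob \<P>)"
    and F0: "sigma_algebra \<Omega> F0" "F0 \<subseteq> F"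
    and F0_01: "\<forall>A\<in>F0. lower_prob \<P> A \<in> {0, 1}"
    and meas: "\<xi> \<in> borel_measurable (sigma \<Omega> F0)"
  shows "lower_prob \<P> {\<omega>\<in>\<Omega>. choquet \<Omega> (lower_prob \<P>) \<xi> \<le> \<xi> \<omega> \<and>
                               \<xi> \<omega> \<le> choquet \<Omega> (upper_prob \<P>) \<xi>} = 1 \<and>
         upper_prob \<P> {\<omega>\<in>\<Omega>. \<xi> \<omega> = choquet \<Omega> (lower_prob \<P>) \<xi>} = 1 \<and>
         upper_prob \<P> {\<omega>\<in>\<Omega>. \<xi> \<omega> = choquet \<Omega> (upper_prob \<P>) \<xi>} = 1"
proof -
  define v where "v = lower_prob \<P>"
  define V where "V = upper_prob \<P>"
  have PF: "\<And>P. P \<in> \<P> \<Longrightarrow> fa_prob \<Omega> F P" using P_fa by blast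
  obtain P0 where P0: "P0 \<in> \<P>" using P_ne by blast
  interpret Fs: sigma_algebra \<Omega> F by (rule F)
  interpret F0s: sigma_algebra \<Omega> F0 by (rule F0(1))
  have OF: "\<Omega> \<in> F" by (rule Fs.top)
  have DiffF: "\<And>A. A \<in> F \<Longrightarrow> \<Omega> - A \<in> F" by (rule Fs.compl_sets)
  have DiffF0: "\<And>A. A \<in> F0 \<Longrightarrow> \<Omega> - A \<in> F0" by (rule F0s.compl_sets)
  have subO: "\<And>A. A \<in> F \<Longrightarrow> A \<subseteq> \<Omega>" by (rule Fs.sets_into_space)
  have emF: "{} \<in> F" by (rule Fs.empty_sets)
  have DF: "\<And>A B. A \<in> F \<Longrightarrow> B \<in> F \<Longrightarrow> A - B \<in> F" by (rule Fs.Diff)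
  have IF: "\<And>A B. A \<in> F \<Longrightarrow> B \<in> F \<Longrightarrow> A \<inter> B \<in> F" by (rule Fs.Int)
  have vle: "\<And>P A. P \<in> \<P> \<Longrightarrow> A \<in> F \<Longrightarrow> v A \<le> P A"
    unfolding v_def using lp_le[OF F P_fa] by blast
  have vge: "\<And>A c. (\<And>P. P \<in> \<P> \<Longrightarrow> c \<le> P A) \<Longrightarrow> c \<le> v A"
    unfolding v_def using lp_ge[OF P_ne] by blast
  have Vge: "\<And>P A. P \<in> \<P> \<Longrightarrow> A \<in> F \<Longrightarrow> P A \<le> V A"
    unfolding V_def using up_ge[OF F P_fa] by blast
  have Vle: "\<And>A c. (\<And>P. P \<in> \<P> \<Longrightarrow> P A \<le> c) \<Longrightarrow> V A \<le> c"
    unfolding V_def using up_le[OF P_ne] by blast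
  have P01: "\<And>P A. P \<in> \<P> \<Longrightarrow> A \<in> F \<Longrightarrow> 0 \<le> P A \<and> P A \<le> 1"
    using fa_props(1,2)[OF F PF] by blast
  have Pcompl: "\<And>P A. P \<in> \<P> \<Longrightarrow> A \<in> F \<Longrightarrow> P (\<Omega> - A) = 1 - P A"
    using fa_props(3)[OF F PF] by blast
  have PO: "\<And>P. P \<in> \<P> \<Longrightarrow> P \<Omega> = 1" using fa_props(4)[OF F PF OF] by blast
  have Pe: "\<And>P. P \<in> \<P> \<Longrightarrow> P {} = 0" using fa_empty[OF F PF] by blast
  have Pmono: "\<And>P A B. P \<in> \<P> \<Longrightarrow> A \<in> F \<Longrightarrow> B \<in> F \<Longrightarrow> A \<subseteq> B \<Longrightarrow> P A \<le> P B"
    using fa_mono[OF F PF] by blast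
  have Psplit: "\<And>P A B. P \<in> \<P> \<Longrightarrow> A \<in> F \<Longrightarrow> B \<in> F \<Longrightarrow> P (A - B) + P (A \<inter> B) = P A"
    using fa_split[OF F PF] by blast
  have vO: "v \<Omega> = 1"
    using vle[OF P0 OF] vge[where A=\<Omega> and c=1] PO P0 by force
  have VO: "V \<Omega> = 1"
    using Vge[OF P0 OF] Vle[where A=\<Omega> and c=1] PO P0 by force
  have ve: "v {} = 0"
    using vle[OF P0 emF] vge[where A="{}" and c=0] Pe P0 by force
  have Ve: "V {} = 0"
    using Vge[OF P0 emF] Vle[where A="{}" and c=0] Pe P0 by force
  have vmono: "\<And>A B. A \<in> F \<Longrightarrow> B \<in> F \<Longrightarrow> A \<subseteq> B \<Longrightarrow> v A \<le> v B"
  proof -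
    fix A B assume h: "A \<in> F" "B \<in> F" "A \<subseteq> B"
    show "v A \<le> v B" using vge vle[OF _ h(1)] Pmono[OF _ h] by (meson order_trans)
  qed
  have Vmono: "\<And>A B. A \<in> F \<Longrightarrow> B \<in> F \<Longrightarrow> A \<subseteq> B \<Longrightarrow> V A \<le> V B"
  proof -
    fix A B assume h: "A \<in> F" "B \<in> F" "A \<subseteq> B"
    show "V A \<le> V B" using Vle Vge[OF _ h(2)] Pmono[OF _ h] by (meson order_trans)
  qed
  have Vv: "\<And>A. A \<in> F \<Longrightarrow> V A = 1 - v (\<Omega> - A)"
  proof -
    fix A assume A: "A \<in> F"
    have "V A \<le> 1 - v (\<Omega> - A)"
    proof (rule Vle)
      fix P assume P: "P \<in> \<P>"
      show "P A \<le> 1 - v (\<Omega> - A)" using vle[OF P DiffF[OF A]] Pcompl[OF P A] by linarith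
    qed
    moreover have "1 - V A \<le> v (\<Omega> - A)"
    proof (rule vge)
      fix P assume P: "P \<in> \<P>"
      show "1 - V A \<le> P (\<Omega> - A)" using Vge[OF P A] Pcompl[OF P A] by linarith
    qed
    ultimately show "V A = 1 - v (\<Omega> - A)" by linarith
  qed
  have sp: "space (sigma \<Omega> F0) = \<Omega>" by (rule F0s.space_measure_of_eq)
  have st: "sets (sigma \<Omega> F0) = F0" by (rule F0s.sets_measure_of_eq)
  have G0: "\<And>t. {\<omega>\<in>\<Omega>. t \<le> \<xi> \<omega>} \<in> F0"
    using meas unfolding borel_measurable_iff_ge sp st by blast
  have G: "\<And>t. {\<omega>\<in>\<Omega>. t \<le> \<xi> \<omega>} \<in> F" using G0 F0(2) by blast
  have H0: "\<And>t. {\<omega>\<in>\<Omega>. t < \<xi> \<omega>} \<in> F0"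
    using meas unfolding borel_measurable_iff_greater sp st by blast
  have H: "\<And>t. {\<omega>\<in>\<Omega>. t < \<xi> \<omega>} \<in> F" using H0 F0(2) by blast
  have v01: "\<And>t. v {\<omega>\<in>\<Omega>. t \<le> \<xi> \<omega>} \<in> {0,1}" using F0_01 G0 unfolding v_def by blast
  have V01: "\<And>t. V {\<omega>\<in>\<Omega>. t \<le> \<xi> \<omega>} \<in> {0,1}"
  proof -
    fix t
    have "v (\<Omega> - {\<omega>\<in>\<Omega>. t \<le> \<xi> \<omega>}) \<in> {0,1}" using F0_01 DiffF0[OF G0] unfolding v_def by blast
    then show "V {\<omega>\<in>\<Omega>. t \<le> \<xi> \<omega>} \<in> {0,1}" using Vv[OF G] by auto
  qed
  obtain a where a1: "\<forall>t. v {\<omega>\<in>\<Omega>. t \<le> \<xi> \<omega>} = (if t \<le> a then 1 else 0)"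
    and a2: "v {\<omega>\<in>\<Omega>. a < \<xi> \<omega>} = 0"
    using threshold[OF F contv[folded v_def] vmono vO ve G v01] by blast
  obtain b where b1: "\<forall>t. V {\<omega>\<in>\<Omega>. t \<le> \<xi> \<omega>} = (if t \<le> b then 1 else 0)"
    and b2: "V {\<omega>\<in>\<Omega>. b < \<xi> \<omega>} = 0"
    using threshold[OF F contV[folded V_def] Vmono VO Ve G V01] by blast
  have ca: "choquet \<Omega> v \<xi> = a" using a1 by (intro choquet_step) auto
  have cb: "choquet \<Omega> V \<xi> = b" using b1 by (intro choquet_step) auto
  have PGa: "\<And>P. P \<in> \<P> \<Longrightarrow> P {\<omega>\<in>\<Omega>. a \<le> \<xi> \<omega>} = 1"
  proof -
    fix P assume P: "P \<in> \<P>"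
    show "P {\<omega>\<in>\<Omega>. a \<le> \<xi> \<omega>} = 1" using vle[OF P G[of a]] a1 P01[OF P G[of a]] by (metis order.refl order_antisym)
  qed
  have PHb: "\<And>P. P \<in> \<P> \<Longrightarrow> P {\<omega>\<in>\<Omega>. b < \<xi> \<omega>} = 0"
  proof -
    fix P assume P: "P \<in> \<P>"
    show "P {\<omega>\<in>\<Omega>. b < \<xi> \<omega>} = 0" using Vge[OF P H[of b]] b2 P01[OF P H[of b]] by linarith
  qed
  have c1: "v {\<omega>\<in>\<Omega>. a \<le> \<xi> \<omega> \<and> \<xi> \<omega> \<le> b} = 1"
  proof -
    define Ga where "Ga = {\<omega>\<in>\<Omega>. a \<le> \<xi> \<omega>}"
    define Hb where "Hb = {\<omega>\<in>\<Omega>. b < \<xi> \<omega>}"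
    have Ga: "Ga \<in> F" using G Ga_def by simp
    have Hb: "Hb \<in> F" using H Hb_def by simp
    have e: "{\<omega>\<in>\<Omega>. a \<le> \<xi> \<omega> \<and> \<xi> \<omega> \<le> b} = Ga - Hb" unfolding Ga_def Hb_def by auto
    have eF: "Ga - Hb \<in> F" using DF Ga Hb by blast
    have "P (Ga - Hb) = 1" if P: "P \<in> \<P>" for P
    proof -
      have "P (Ga \<inter> Hb) \<le> P Hb" using Pmono[OF P IF[OF Ga Hb] Hb] by blast
      moreover have "0 \<le> P (Ga \<inter> Hb)" using P01[OF P IF[OF Ga Hb]] by blast
      moreover have "P (Ga - Hb) \<le> 1" using P01[OF P eF] by blast
      moreover have "P Ga = 1" using PGa[OF P] Ga_def by simp
      moreover have "P Hb = 0" using PHb[OF P] Hb_def by simp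
      ultimately show ?thesis using Psplit[OF P Ga Hb] by linarith
    qed
    then have P1: "\<And>P. P \<in> \<P> \<Longrightarrow> P (Ga - Hb) = 1" by blast
    have "1 \<le> v (Ga - Hb)" by (rule vge) (simp add: P1)
    moreover have "v (Ga - Hb) \<le> 1" using vle[OF P0 eF] P1[OF P0] by simp
    ultimately show ?thesis unfolding e by linarith
  qed
  have c2: "V {\<omega>\<in>\<Omega>. \<xi> \<omega> = a} = 1"
  proof -
    define Ha where "Ha = {\<omega>\<in>\<Omega>. a < \<xi> \<omega>}"
    have Ha: "Ha \<in> F" using H Ha_def by simp
    have e: "{\<omega>\<in>\<Omega>. \<xi> \<omega> = a} = {\<omega>\<in>\<Omega>. a \<le> \<xi> \<omega>} - Ha" unfolding Ha_def by auto
    have eF: "{\<omega>\<in>\<Omega>. \<xi> \<omega> = a} \<in> F" unfolding e using G Ha DF by blast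
    have "P {\<omega>\<in>\<Omega>. \<xi> \<omega> = a} \<ge> 1 - P Ha" if P: "P \<in> \<P>" for P
    proof -
      have "P ({\<omega>\<in>\<Omega>. a \<le> \<xi> \<omega>} \<inter> Ha) \<le> P Ha"
        using Pmono[OF P IF[OF G[of a] Ha] Ha] by blast
      then show ?thesis unfolding e using Psplit[OF P G[of a] Ha] PGa[OF P] by linarith
    qed
    note L = this
    have "V (\<Omega> - Ha) \<le> V {\<omega>\<in>\<Omega>. \<xi> \<omega> = a}"
    proof (rule Vle)
      fix P assume P: "P \<in> \<P>"
      show "P (\<Omega> - Ha) \<le> V {\<omega>\<in>\<Omega>. \<xi> \<omega> = a}"
        using L[OF P] Pcompl[OF P Ha] Vge[OF P eF] by linarith
    qed
    moreover have "V (\<Omega> - Ha) = 1"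
    proof -
      have "\<Omega> - (\<Omega> - Ha) = Ha" using subO[OF Ha] by auto
      then have "V (\<Omega> - Ha) = 1 - v Ha" using Vv[OF DiffF[OF Ha]] by simp
      then show ?thesis using a2 Ha_def by simp
    qed
    moreover have "V {\<omega>\<in>\<Omega>. \<xi> \<omega> = a} \<le> 1" by (rule Vle) (use P01[OF _ eF] in blast)
    ultimately show ?thesis by linarith
  qed
  have c3: "V {\<omega>\<in>\<Omega>. \<xi> \<omega> = b} = 1"
  proof -
    define Gb where "Gb = {\<omega>\<in>\<Omega>. b \<le> \<xi> \<omega>}"
    define Hb where "Hb = {\<omega>\<in>\<Omega>. b < \<xi> \<omega>}"
    have Gb: "Gb \<in> F" using G Gb_def by simp
    have Hb: "Hb \<in> F" using H Hb_def by simp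
    have e: "{\<omega>\<in>\<Omega>. \<xi> \<omega> = b} = Gb - Hb" unfolding Gb_def Hb_def by auto
    have eF: "{\<omega>\<in>\<Omega>. \<xi> \<omega> = b} \<in> F" unfolding e using Gb Hb DF by blast
    have "P {\<omega>\<in>\<Omega>. \<xi> \<omega> = b} \<ge> P Gb" if P: "P \<in> \<P>" for P
    proof -
      have "P (Gb \<inter> Hb) \<le> P Hb"
        using Pmono[OF P IF[OF Gb Hb] Hb] by blast
      moreover have "P Hb = 0" using PHb[OF P] Hb_def by simp
      moreover have "0 \<le> P (Gb \<inter> Hb)" using P01[OF P IF[OF Gb Hb]] by blast
      ultimately show ?thesis unfolding e using Psplit[OF P Gb Hb] by linarith
    qed
    note L = this
    have "V Gb \<le> V {\<omega>\<in>\<Omega>. \<xi> \<omega> = b}"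
    proof (rule Vle)
      fix P assume P: "P \<in> \<P>"
      show "P Gb \<le> V {\<omega>\<in>\<Omega>. \<xi> \<omega> = b}"
        using L[OF P] Vge[OF P eF] by linarith
    qed
    moreover have "V Gb = 1" using b1 Gb_def by simp
    moreover have "V {\<omega>\<in>\<Omega>. \<xi> \<omega> = b} \<le> 1" by (rule Vle) (use P01[OF _ eF] in blast)
    ultimately show ?thesis by linarith
  qed
  show ?thesis
    using c1 c2 c3 unfolding ca[unfolded v_def] cb[unfolded V_def] v_def V_def by simp
qed

end
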